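(* Let $G$ be a non-complete double-critical $k$-chromatic graph. Then every vertex of $G$ has at least $k+1$ neighbours.
   Context: All graphs are finite and simple. A graph $G$ is (vertex-)critical if $\chi(G-v)<\chi(G)$ for every vertex $v\in V(G)$. A critical graph $G$ is double-critical if $\chi(G-x-y)\le\chi(G)-2$ for every edge $xy\in E(G)$. *)

theory Defs
  imports Main
begin

definition simple_graph :: "'a set \<Rightarrow> 'a set set \<Rightarrow> bool" where
  "simple_graph V E \<longleftrightarrow> finite V \<and> (\<forall>e\<in>E. \<exists>u v. u \<in> V \<and> v \<in> V \<and> u \<noteq> v \<and> e = {u, v})"

definition colouring :: "'a set \<Rightarrow> 'a set set \<Rightarrow> nat \<Rightarrow> ('a \<Rightarrow> nat) \<Rightarrow> bool" where
  "colouring V E k c \<longleftrightarrow> (\<forall>x\<in>V. c x < k) \<and> (\<forall>u v. {u, v} \<in> E \<longrightarrow> c u \<noteq> c v)"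

definition colourable :: "'a set \<Rightarrow> 'a set set \<Rightarrow> nat \<Rightarrow> bool" where
  "colourable V E k \<longleftrightarrow> (\<exists>c. colouring V E k c)"

definition chromatic_number :: "'a set \<Rightarrow> 'a set set \<Rightarrow> nat" where
  "chromatic_number V E = (LEAST k. colourable V E k)"

definition del_vertices :: "'a set \<Rightarrow> 'a set set \<Rightarrow> 'a set \<Rightarrow> 'a set set" where
  "del_vertices V E S = {e \<in> E. e \<subseteq> V - S}"

definition critical :: "'a set \<Rightarrow> 'a set set \<Rightarrow> bool" where
  "critical V E \<longleftrightarrow> (\<forall>v\<in>V. chromatic_number (V - {v}) (del_vertices V E {v}) < chromatic_number V E)"

definition double_critical :: "'a set \<Rightarrow> 'a set set \<Rightarrow> bool" where
  "double_critical V E \<longleftrightarrow> critical V E \<and>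
     (\<forall>x y. {x, y} \<in> E \<longrightarrow>
        chromatic_number (V - {x, y}) (del_vertices V E {x, y}) + 2 \<le> chromatic_number V E)"

definition complete_graph :: "'a set \<Rightarrow> 'a set set \<Rightarrow> bool" where
  "complete_graph V E \<longleftrightarrow> (\<forall>u\<in>V. \<forall>v\<in>V. u \<noteq> v \<longrightarrow> {u, v} \<in> E)"

definition neighbours :: "'a set \<Rightarrow> 'a set set \<Rightarrow> 'a \<Rightarrow> 'a set" where
  "neighbours V E v = {u \<in> V. {u, v} \<in> E}"

end

theory Submission
  imports Defs
begin

lemma edge_facts:
  assumes "simple_graph V E" "{u,v} \<in> E"
  shows "u \<in> V \<and> v \<in> V \<and> u \<noteq> v"
proof -
  obtain a b where "a \<in> V" "b \<in> V" "a \<noteq> b" "{u,v} = {a,b}"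
    using assms unfolding simple_graph_def by blast
  then show ?thesis by (auto simp: doubleton_eq_iff)
qed

lemma simple_del: "simple_graph V E \<Longrightarrow> simple_graph (V - S) (del_vertices V E S)"
  unfolding simple_graph_def del_vertices_def by fastforce

lemma col_exists:
  assumes "simple_graph V E" shows "colourable V E (card V)"
proof -
  have fin: "finite V" using assms by (simp add: simple_graph_def)
  obtain h where h: "bij_betw h V {0..<card V}" using ex_bij_betw_finite_nat[OF fin] by blast
  have "colouring V E (card V) h"
    unfolding colouring_def
  proof (intro conjI allI impI ballI)
    fix x assume "x \<in> V" then show "h x < card V" using h by (auto simp: bij_betw_def)
  next
    fix u v assume "{u,v} \<in> E"
    then have "u \<in> V" "v \<in> V" "u \<noteq> v" using edge_facts[OF assms] by auto
    then show "h u \<noteq> h v" using h by (auto simp: bij_betw_def inj_on_def)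
  qed
  then show ?thesis by (auto simp: colourable_def)
qed

lemma chi_colouring:
  assumes "simple_graph V E" shows "\<exists>c. colouring V E (chromatic_number V E) c"
proof -
  have "colourable V E (chromatic_number V E)"
    unfolding chromatic_number_def by (rule LeastI[where P="colourable V E", OF col_exists[OF assms]])
  then show ?thesis by (simp add: colourable_def)
qed

lemma chi_le: "colouring V E m c \<Longrightarrow> chromatic_number V E \<le> m"
  unfolding chromatic_number_def by (rule Least_le) (auto simp: colourable_def)

lemma colouring_mono: "colouring V E m c \<Longrightarrow> m \<le> m' \<Longrightarrow> colouring V E m' c"
  unfolding colouring_def by auto

lemma clique_bound:
  assumes "colouring V E m c" "C \<subseteq> V" "\<forall>u\<in>C. \<forall>v\<in>C. u \<noteq> v \<longrightarrow> {u,v} \<in> E"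
  shows "card C \<le> m"
proof -
  have "inj_on c C" using assms unfolding colouring_def inj_on_def by blast
  moreover have "c ` C \<subseteq> {..<m}" using assms unfolding colouring_def by auto
  ultimately show ?thesis using card_inj_on_le by (metis card_lessThan finite_lessThan)
qed

lemma deg_lower:
  assumes G: "simple_graph V E" and cr: "critical V E" and x: "x \<in> V"
  shows "chromatic_number V E \<le> card (neighbours V E x) + 1"
proof -
  let ?N = "neighbours V E x"
  let ?d = "card ?N"
  have finN: "finite ?N" using G by (simp add: simple_graph_def neighbours_def)
  obtain c where c: "colouring (V - {x}) (del_vertices V E {x}) (chromatic_number (V - {x}) (del_vertices V E {x})) c"
    using chi_colouring[OF simple_del[OF G]] by blast
  define k' where "k' = chromatic_number (V - {x}) (del_vertices V E {x})"
  have lt: "k' < chromatic_number V E" using cr x by (simp add: critical_def k'_def)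
  have "card (c ` ?N) \<le> ?d" using finN card_image_le by blast
  then have "card (c ` ?N) < card {..?d}" by simp
  then obtain a where a: "a \<in> {..?d}" "a \<notin> c ` ?N"
  proof -
    have "\<not> {..?d} \<subseteq> c ` ?N" using \<open>card (c ` ?N) < card {..?d}\<close> card_mono finN
      by (metis finite_imageI not_le)
    then show ?thesis using that by blast
  qed
  define c' where "c' = c(x := a)"
  have "colouring V E (max k' (?d+1)) c'"
    unfolding colouring_def
  proof (intro conjI allI impI ballI)
    fix w assume "w \<in> V"
    then show "c' w < max k' (?d+1)" using c a unfolding c'_def colouring_def k'_def
      by (cases "w = x") (auto simp: less_max_iff_disj)
  next
    fix u v assume e: "{u,v} \<in> E"
    then have uv: "u \<in> V" "v \<in> V" "u \<noteq> v" using edge_facts[OF G] by auto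
    show "c' u \<noteq> c' v"
    proof (cases "u = x")
      case True
      then have "v \<in> ?N" using e uv by (auto simp: neighbours_def insert_commute)
      then show ?thesis using True uv a unfolding c'_def by auto
    next
      case False
      show ?thesis
      proof (cases "v = x")
        case True
        then have "u \<in> ?N" using e uv by (auto simp: neighbours_def)
        then show ?thesis using True False a unfolding c'_def by auto
      next
        case False2: False
        have "{u,v} \<in> del_vertices V E {x}" using e uv False False2
          by (auto simp: del_vertices_def)
        then show ?thesis using c False False2 unfolding c'_def colouring_def by auto
      qed
    qed
  qed
  then have "chromatic_number V E \<le> max k' (?d+1)" by (rule chi_le)
  then show ?thesis using lt by linarith
qed

lemma common:
  assumes G: "simple_graph V E"
    and phi: "colouring (V - {x,y}) (del_vertices V E {x,y}) (k-2) \<phi>"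
    and e: "{x,y} \<in> E" and k: "chromatic_number V E = k" and i: "i < k - 2"
  shows "\<exists>z\<in>V-{x,y}. \<phi> z = i \<and> {z,x} \<in> E \<and> {z,y} \<in> E"
proof (rule ccontr)
  assume nz: "\<not> ?thesis"
  have xy: "x \<in> V" "y \<in> V" "x \<noteq> y" using edge_facts[OF G e] by auto
  define A where "A = {u \<in> V - {x,y}. \<phi> u = i \<and> {u,x} \<in> E}"
  define c' where "c' u = (if u = x then i else if u = y then k-2 else if u \<in> A then k-2 else \<phi> u)" for u
  have "colouring V E (k-1) c'"
    unfolding colouring_def
  proof (intro conjI allI impI ballI)
    fix w assume "w \<in> V"
    have ph: "\<And>w. w \<in> V - {x,y} \<Longrightarrow> \<phi> w < k-2" using phi by (auto simp: colouring_def)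
    have kk: "k-2 < k-1" using i by linarith
    show "c' w < k-1"
    proof (cases "w \<in> V - {x,y}")
      case True then show ?thesis using ph[OF True] kk i unfolding c'_def by auto
    next
      case False then show ?thesis using kk i \<open>w \<in> V\<close> unfolding c'_def by auto
    qed
  next
    fix u v assume ev: "{u,v} \<in> E"
    have ph: "\<And>w. w \<in> V - {x,y} \<Longrightarrow> \<phi> w < k-2" using phi by (auto simp: colouring_def)
    have ed: "\<And>u v. {u,v} \<in> E \<Longrightarrow> u \<notin> {x,y} \<Longrightarrow> v \<notin> {x,y} \<Longrightarrow> \<phi> u \<noteq> \<phi> v"
    proof -
      fix u v assume a: "{u,v} \<in> E" "u \<notin> {x,y}" "v \<notin> {x,y}"
      then have "{u,v} \<in> del_vertices V E {x,y}" using edge_facts[OF G a(1)]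
        by (auto simp: del_vertices_def)
      then show "\<phi> u \<noteq> \<phi> v" using phi by (auto simp: colouring_def)
    qed
    have cx: "c' x = i" "c' y = k-2" using xy by (auto simp: c'_def)
    have cw: "\<And>w. w \<notin> {x,y} \<Longrightarrow> c' w = (if w \<in> A then k-2 else \<phi> w)" by (auto simp: c'_def)
    have H: "c' a \<noteq> c' b" if ab: "{a,b} \<in> E" "b \<notin> {x,y}" for a b
    proof -
      have bV: "b \<in> V - {x,y}" "a \<in> V" using edge_facts[OF G ab(1)] ab(2) by auto
      consider "a = x" | "a = y" | "a \<notin> {x,y}" by blast
      then show ?thesis
      proof cases
        case 1
        have "{b,x} \<in> E" using ab 1 by (simp add: insert_commute)
        then show ?thesis using 1 cx cw[OF ab(2)] i bV by (auto simp: A_def)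
      next
        case 2
        have "{b,y} \<in> E" using ab 2 by (simp add: insert_commute)
        then show ?thesis using 2 cx cw[OF ab(2)] ph[OF bV(1)] bV nz by (auto simp: A_def)
      next
        case 3
        have aV: "a \<in> V - {x,y}" using 3 bV by auto
        show ?thesis using cw[OF 3] cw[OF ab(2)] ph[OF aV] ph[OF bV(1)] ed[OF ab(1) 3 ab(2)]
          by (auto simp: A_def)
      qed
    qed
    have uv: "u \<noteq> v" using edge_facts[OF G ev] by auto
    show "c' u \<noteq> c' v"
    proof (cases "v \<in> {x,y}")
      case False then show ?thesis using H[OF ev] by blast
    next
      case True
      show ?thesis
      proof (cases "u \<in> {x,y}")
        case False
        have "{v,u} \<in> E" using ev by (simp add: insert_commute)
        then show ?thesis using H[of v u] False by auto
      next
        case True2: True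
        then show ?thesis using True uv cx i by auto
      qed
    qed
  qed
  then have "k \<le> k - 1" using chi_le k by metis
  then show False using i by linarith
qed

theorem proposition11:
  fixes V :: "'a set" and E :: "'a set set" and k :: nat
  assumes "simple_graph V E"
    and "double_critical V E"
    and "chromatic_number V E = k"
    and "\<not> complete_graph V E"
  shows "\<forall>v\<in>V. card (neighbours V E v) \<ge> k + 1"
proof
  fix x assume x: "x \<in> V"
  note G = assms(1)
  have cr: "critical V E" using assms(2) by (simp add: double_critical_def)
  let ?N = "neighbours V E x"
  have finN: "finite ?N" using G by (simp add: simple_graph_def neighbours_def)
  have NV: "?N \<subseteq> V" by (auto simp: neighbours_def)
  have xN: "x \<notin> ?N" using edge_facts[OF G, of x x] by (auto simp: neighbours_def)
  show "card ?N \<ge> k + 1"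
  proof (cases "\<forall>y\<in>?N. \<forall>y'\<in>?N. y \<noteq> y' \<longrightarrow> {y,y'} \<in> E")
    case True
    define C where "C = insert x ?N"
    have CV: "C \<subseteq> V" using NV x by (auto simp: C_def)
    have clq: "\<forall>u\<in>C. \<forall>v\<in>C. u \<noteq> v \<longrightarrow> {u,v} \<in> E"
      using True by (auto simp: C_def neighbours_def insert_commute)
    obtain c where c: "colouring V E k c" using chi_colouring[OF G] assms(3) by metis
    have cC: "card C = card ?N + 1" using finN xN by (simp add: C_def)
    have "card C \<le> k" using clique_bound[OF c CV clq] .
    moreover have "k \<le> card ?N + 1" using deg_lower[OF G cr x] assms(3) by simp
    ultimately have cCk: "card C = k" using cC by linarith
    have "V = C"
    proof (rule ccontr)
      assume "V \<noteq> C"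
      then obtain v where v: "v \<in> V" "v \<notin> C" using CV by blast
      obtain c2 where c2: "colouring (V - {v}) (del_vertices V E {v}) (chromatic_number (V - {v}) (del_vertices V E {v})) c2"
        using chi_colouring[OF simple_del[OF G]] by blast
      have "C \<subseteq> V - {v}" using CV v by auto
      moreover have "\<forall>u\<in>C. \<forall>w\<in>C. u \<noteq> w \<longrightarrow> {u,w} \<in> del_vertices V E {v}"
        using clq CV v by (auto simp: del_vertices_def)
      ultimately have "card C \<le> chromatic_number (V - {v}) (del_vertices V E {v})"
        using clique_bound[OF c2] by blast
      moreover have "chromatic_number (V - {v}) (del_vertices V E {v}) < k"
        using cr v assms(3) by (simp add: critical_def)
      ultimately show False using cCk by linarith
    qed
    then have "complete_graph V E" using clq by (simp add: complete_graph_def)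
    then show ?thesis using assms(4) by simp
  next
    case False
    then obtain y y' where yy: "y \<in> ?N" "y' \<in> ?N" "y \<noteq> y'" "{y,y'} \<notin> E" by blast
    have exy: "{x,y} \<in> E" using yy by (auto simp: neighbours_def insert_commute)
    have exy': "{x,y'} \<in> E" using yy by (auto simp: neighbours_def insert_commute)
    have dc: "\<And>a b. {a,b} \<in> E \<Longrightarrow> chromatic_number (V - {a,b}) (del_vertices V E {a,b}) + 2 \<le> k"
      using assms(2,3) by (simp add: double_critical_def)
    have k2: "k \<ge> 2" using dc[OF exy] by simp
    obtain \<phi>0 where "colouring (V - {x,y}) (del_vertices V E {x,y}) (chromatic_number (V - {x,y}) (del_vertices V E {x,y})) \<phi>0"
      using chi_colouring[OF simple_del[OF G]] by blast
    then have \<phi>: "colouring (V - {x,y}) (del_vertices V E {x,y}) (k-2) \<phi>0"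
      using colouring_mono dc[OF exy] by (metis le_diff_conv2 k2 add.commute)
    obtain \<psi> where "colouring (V - {x,y'}) (del_vertices V E {x,y'}) (chromatic_number (V - {x,y'}) (del_vertices V E {x,y'})) \<psi>"
      using chi_colouring[OF simple_del[OF G]] by blast
    then have \<psi>: "colouring (V - {x,y'}) (del_vertices V E {x,y'}) (k-2) \<psi>"
      using colouring_mono dc[OF exy'] by (metis le_diff_conv2 k2 add.commute)
    have y'V: "y' \<in> V - {x,y}" using yy xN by (auto simp: neighbours_def)
    then have "\<phi>0 y' < k - 2" using \<phi> by (auto simp: colouring_def)
    then obtain z where z: "z \<in> V - {x,y}" "\<phi>0 z = \<phi>0 y'" "{z,x} \<in> E" "{z,y} \<in> E"
      using common[OF G \<phi> exy assms(3)] by blast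
    have zy': "z \<noteq> y'" using z yy by (auto simp: insert_commute)
    have nzy': "{z,y'} \<notin> E"
    proof
      assume "{z,y'} \<in> E"
      then have "{z,y'} \<in> del_vertices V E {x,y}" using z y'V by (auto simp: del_vertices_def)
      then show False using \<phi> z by (auto simp: colouring_def)
    qed
    define f where "f i = (SOME w. w \<in> V - {x,y'} \<and> \<psi> w = i \<and> {w,x} \<in> E \<and> {w,y'} \<in> E)" for i
    have fP: "f i \<in> V - {x,y'} \<and> \<psi> (f i) = i \<and> {f i,x} \<in> E \<and> {f i,y'} \<in> E" if "i < k-2" for i
      unfolding f_def by (rule someI_ex) (use common[OF G \<psi> exy' assms(3) that] in blast)
    define Z where "Z = f ` {..<k-2}"
    have inj: "inj_on f {..<k-2}" using fP by (metis inj_onI lessThan_iff)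
    have cZ: "card Z = k - 2" using card_image[OF inj] by (simp add: Z_def)
    have ZN: "Z \<subseteq> ?N" using fP by (auto simp: Z_def neighbours_def)
    have yZ: "y \<notin> Z" using fP yy by (auto simp: Z_def insert_commute)
    have zZ: "z \<notin> Z" using fP nzy' by (auto simp: Z_def)
    have y'Z: "y' \<notin> Z" using fP by (auto simp: Z_def)
    have zN: "z \<in> ?N" using z by (auto simp: neighbours_def)
    have sub: "Z \<union> {y,z,y'} \<subseteq> ?N" using ZN zN yy by auto
    have fZ: "finite Z" by (simp add: Z_def)
    have "card (Z \<union> {y,z,y'}) = k + 1"
      using cZ yZ zZ y'Z zy' z yy fZ k2 by (auto simp: card_insert_if)
    then show ?thesis using card_mono[OF finN sub] by simp
  qed
qed

end
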